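(* Let $H\in\mathbb R^{n\times n}$, $f\in\mathbb R^n$, $A\in\mathbb R^{m\times n}$, $b\in\mathbb R^m$, with $\mathcal X=\{x: Ax\le b\}$ nonempty and $H+H^\top$ positive definite. Let $x^*$ be the unique solution of the AVI: find $x\in\mathcal X$ with $(Hx+f)^\top(y-x)\ge0$ for all $y\in\mathcal X$, let $\mathcal A=\{i: A_ix^*=b_i\}$, assume the rows of $A_{\mathcal A}$ are linearly independent, let $\lambda^*$ be the unique vector with $Hx^*+f+A^\top\lambda^*=0$, $0\le\lambda^*\perp b-Ax^*\ge0$, and assume $\lambda^*_i>0$ for all $i\in\mathcal A$. Fix $\rho>0$. Then there is a neighborhood $U$ of $x^*$ such that for all $z\in U$, $\mathcal A_{\mathrm{QP}}(z)=\mathcal A$.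
   Context: $A_i$, $b_i$ are the $i$-th row of $A$ and entry of $b$; $A_{\mathcal S}$ is the submatrix of rows indexed by $\mathcal S$. $H_s=\tfrac12(H+H^\top)$, $\tilde H=\rho I+H_s$, $\tilde f(z)=f+(H-\tilde H)z$. For $z\in\mathbb R^n$, $\mathcal S_x(z)$ is the unique minimizer of the quadratic program $\min_x\tfrac12x^\top\tilde Hx+\tilde f(z)^\top x$ subject to $Ax\le b$, and $\mathcal A_{\mathrm{QP}}(z)=\{i\in\{1,\dots,m\}: A_i\mathcal S_x(z)=b_i\}$ is its active set. *)

theory Defs
  imports "HOL-Analysis.Analysis"
begin

definition polyhedron :: "real^'n^'m \<Rightarrow> real^'m \<Rightarrow> (real^'n) set" where
  "polyhedron A b = {x. \<forall>i. (A *v x) $ i \<le> b $ i}"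

definition is_AVI_sol :: "real^'n^'n \<Rightarrow> real^'n \<Rightarrow> real^'n^'m \<Rightarrow> real^'m \<Rightarrow> real^'n \<Rightarrow> bool" where
  "is_AVI_sol H f A b x \<longleftrightarrow> x \<in> polyhedron A b \<and>
     (\<forall>y \<in> polyhedron A b. (H *v x + f) \<bullet> (y - x) \<ge> 0)"

definition active_set :: "real^'n^'m \<Rightarrow> real^'m \<Rightarrow> real^'n \<Rightarrow> 'm set" where
  "active_set A b x = {i. (A *v x) $ i = b $ i}"

definition Hsym :: "real^'n^'n \<Rightarrow> real^'n^'n" where
  "Hsym H = (1/2) *\<^sub>R (H + transpose H)"

definition Htilde :: "real \<Rightarrow> real^'n^'n \<Rightarrow> real^'n^'n" where
  "Htilde \<rho> H = \<rho> *\<^sub>R mat 1 + Hsym H"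

definition ftilde :: "real \<Rightarrow> real^'n^'n \<Rightarrow> real^'n \<Rightarrow> real^'n \<Rightarrow> real^'n" where
  "ftilde \<rho> H f z = f + (H - Htilde \<rho> H) *v z"

definition QP_obj :: "real \<Rightarrow> real^'n^'n \<Rightarrow> real^'n \<Rightarrow> real^'n \<Rightarrow> real^'n \<Rightarrow> real" where
  "QP_obj \<rho> H f z x = (1/2) * (x \<bullet> (Htilde \<rho> H *v x)) + ftilde \<rho> H f z \<bullet> x"

definition Sx :: "real \<Rightarrow> real^'n^'n \<Rightarrow> real^'n \<Rightarrow> real^'n^'m \<Rightarrow> real^'m \<Rightarrow> real^'n \<Rightarrow> real^'n" where
  "Sx \<rho> H f A b z = (THE x. x \<in> polyhedron A b \<and>
      (\<forall>y \<in> polyhedron A b. QP_obj \<rho> H f z x \<le> QP_obj \<rho> H f z y))"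

definition A_QP :: "real \<Rightarrow> real^'n^'n \<Rightarrow> real^'n \<Rightarrow> real^'n^'m \<Rightarrow> real^'m \<Rightarrow> real^'n \<Rightarrow> 'm set" where
  "A_QP \<rho> H f A b z = active_set A b (Sx \<rho> H f A b z)"

end

theory Submission
  imports Defs
begin

definition phiq :: "real^'n^'n \<Rightarrow> real^'n \<Rightarrow> real^'n \<Rightarrow> real" where
  "phiq Q c x = (1/2) * (x \<bullet> (Q *v x)) + c \<bullet> x"

lemma phi_expand:
  fixes Q :: "real^'n^'n"
  assumes sym: "\<And>x y. x \<bullet> (Q *v y) = y \<bullet> (Q *v x)"
  shows "phiq Q c (x + h) - phiq Q c x = (Q *v x + c) \<bullet> h + (1/2) * (h \<bullet> (Q *v h))"
proof -
  have "(x + h) \<bullet> (Q *v (x + h)) = x \<bullet> (Q *v x) + 2 * (h \<bullet> (Q *v x)) + h \<bullet> (Q *v h)"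
    using sym[of x h] by (simp add: matrix_vector_right_distrib inner_add_left inner_add_right)
  then show ?thesis unfolding phiq_def by (simp add: inner_add_left inner_add_right inner_commute algebra_simps)
qed

lemma min_VI:
  fixes Q :: "real^'n^'n"
  assumes sym: "\<And>x y. x \<bullet> (Q *v y) = y \<bullet> (Q *v x)"
    and psd: "\<And>x. 0 \<le> x \<bullet> (Q *v x)"
    and cvx: "convex X" and xX: "x \<in> X" and yX: "y \<in> X"
    and mn: "\<forall>y\<in>X. phiq Q c x \<le> phiq Q c y"
  shows "(Q *v x + c) \<bullet> (y - x) \<ge> 0"
proof (rule ccontr)
  define G where "G = (Q *v x + c) \<bullet> (y - x)"
  define K where "K = (y - x) \<bullet> (Q *v (y - x))"
  assume "\<not> ?thesis"
  hence G: "G < 0" by (simp add: G_def)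
  have K: "K \<ge> 0" using psd by (simp add: K_def)
  define t where "t = min 1 (-G/(K+1))"
  have t0: "t > 0" using G K by (simp add: t_def divide_less_0_iff)
  have t1: "t \<le> 1" by (simp add: t_def)
  have "t \<le> -G/(K+1)" unfolding t_def by simp
  hence "t * (K+1) \<le> (-G/(K+1)) * (K+1)" using K by (intro mult_right_mono) auto
  hence tK: "t * (K+1) \<le> -G" using K by simp
  have "x + t *\<^sub>R (y - x) \<in> X"
  proof -
    have "x + t *\<^sub>R (y - x) = (1 - t) *\<^sub>R x + t *\<^sub>R y" by (simp add: algebra_simps)
    thus ?thesis using cvx xX yX t0 t1 by (simp add: convex_def)
  qed
  hence "phiq Q c x \<le> phiq Q c (x + t *\<^sub>R (y - x))" using mn by blast
  moreover have "phiq Q c (x + t *\<^sub>R (y - x)) - phiq Q c x = t * G + (1/2) * (t * t * K)"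
    using phi_expand[OF sym, of c x "t *\<^sub>R (y - x)"]
    by (simp add: G_def K_def matrix_vector_mult_scaleR)
  ultimately have "0 \<le> t * G + (1/2) * (t * t * K)" by linarith
  also have "t * G + (1/2) * (t * t * K) = t * (G + (1/2) * (t * K))" by (simp add: algebra_simps)
  finally have "0 \<le> G + (1/2) * (t * K)" using t0 by (simp add: zero_le_mult_iff)
  moreover have "t * K \<ge> 0" using t0 K by simp
  moreover have "t * (K + 1) = t * K + t" by (simp add: algebra_simps)
  ultimately show False using tK G t0 by linarith
qed

lemma VI_min:
  fixes Q :: "real^'n^'n"
  assumes sym: "\<And>x y. x \<bullet> (Q *v y) = y \<bullet> (Q *v x)"
    and psd: "\<And>x. 0 \<le> x \<bullet> (Q *v x)"
    and vi: "\<forall>y\<in>X. (Q *v x + c) \<bullet> (y - x) \<ge> 0" and yX: "y \<in> X"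
  shows "phiq Q c x \<le> phiq Q c y"
proof -
  have "phiq Q c (x + (y - x)) - phiq Q c x = (Q *v x + c) \<bullet> (y - x) + (1/2) * ((y - x) \<bullet> (Q *v (y - x)))"
    by (rule phi_expand[OF sym])
  moreover have "(Q *v x + c) \<bullet> (y - x) \<ge> 0" using vi yX by blast
  moreover have "0 \<le> (y - x) \<bullet> (Q *v (y - x))" by (rule psd)
  ultimately show ?thesis by simp
qed

lemma VI_lip:
  fixes Q :: "real^'n^'n"
  assumes coer: "\<And>x. \<rho> * (x \<bullet> x) \<le> x \<bullet> (Q *v x)" and rho: "\<rho> > 0"
    and x1: "x1 \<in> X" and x2: "x2 \<in> X"
    and vi1: "\<forall>y\<in>X. (Q *v x1 + c1) \<bullet> (y - x1) \<ge> 0"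
    and vi2: "\<forall>y\<in>X. (Q *v x2 + c2) \<bullet> (y - x2) \<ge> 0"
  shows "\<rho> * norm (x1 - x2) \<le> norm (c1 - c2)"
proof -
  define h where "h = x1 - x2"
  have a: "(Q *v x1 + c1) \<bullet> (x2 - x1) \<ge> 0" using vi1 x2 by blast
  have b: "(Q *v x2 + c2) \<bullet> (x1 - x2) \<ge> 0" using vi2 x1 by blast
  have e1: "(Q *v x2 + c2) \<bullet> (x1 - x2) = - ((Q *v x2 + c2) \<bullet> (x2 - x1))"
    by (metis inner_minus_right minus_diff_eq)
  have e2: "(Q *v x1 + c1) - (Q *v x2 + c2) = Q *v h + (c1 - c2)" by (simp add: h_def vec.diff)
  have e3: "x2 - x1 = - h" by (simp add: h_def)
  have "(Q *v x1 + c1) \<bullet> (x2 - x1) + (Q *v x2 + c2) \<bullet> (x1 - x2) = ((Q *v x1 + c1) - (Q *v x2 + c2)) \<bullet> (x2 - x1)"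
    using e1 by (simp only: inner_diff_left)
  also have "\<dots> = (Q *v h) \<bullet> (-h) + (c1 - c2) \<bullet> (-h)" by (simp only: e2 e3 inner_add_left)
  also have "\<dots> = (c1 - c2) \<bullet> (-h) - h \<bullet> (Q *v h)" by (simp add: inner_commute)
  finally have "(Q *v x1 + c1) \<bullet> (x2 - x1) + (Q *v x2 + c2) \<bullet> (x1 - x2) = (c1 - c2) \<bullet> (-h) - h \<bullet> (Q *v h)" .
  with a b have "h \<bullet> (Q *v h) \<le> (c1 - c2) \<bullet> (-h)" by linarith
  also have "\<dots> \<le> norm (c1 - c2) * norm h" using Cauchy_Schwarz_ineq2[of "c1 - c2" "-h"] by simp
  finally have "\<rho> * (norm h * norm h) \<le> norm (c1 - c2) * norm h"
    using coer[of h] by (simp add: dot_square_norm power2_eq_square)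
  hence "norm h * (\<rho> * norm h) \<le> norm h * norm (c1 - c2)" by (simp add: algebra_simps)
  hence "norm h = 0 \<or> \<rho> * norm h \<le> norm (c1 - c2)" by (metis mult_le_cancel_left norm_ge_zero order_le_less)
  thus ?thesis unfolding h_def by auto
qed

lemma coercive_bound:
  fixes r C M \<rho> :: real
  assumes rho: "\<rho> > 0" and r: "r \<ge> 0" and le: "\<rho> * (r * r) / 2 - C * r \<le> M"
  shows "r \<le> 2 * (\<bar>C\<bar> + \<bar>M\<bar>) / \<rho> + 1"
proof (rule ccontr)
  assume "\<not> ?thesis"
  hence r1: "r > 2 * (\<bar>C\<bar> + \<bar>M\<bar>) / \<rho> + 1" by simp
  hence "r * \<rho> > 2 * (\<bar>C\<bar> + \<bar>M\<bar>) + \<rho>" using rho by (simp add: field_simps)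
  hence a: "\<rho> * r / 2 > \<bar>C\<bar> + \<bar>M\<bar>" using rho by (simp add: field_simps)
  have r1': "r > 1" using r1 rho by (smt (verit) divide_nonneg_pos)
  have "r * (\<rho> * r / 2) > r * (\<bar>C\<bar> + \<bar>M\<bar>)" using a r1' by (intro mult_strict_left_mono) auto
  moreover have "(r - 1) * \<bar>M\<bar> \<ge> 0" using r1' by simp
  moreover have "r * \<bar>C\<bar> \<ge> C * r" using r by (smt (verit) abs_ge_self mult_right_mono mult.commute)
  moreover have "\<rho> * (r * r) / 2 = r * (\<rho> * r / 2)" by simp
  moreover have "r * (\<bar>C\<bar> + \<bar>M\<bar>) = r * \<bar>C\<bar> + \<bar>M\<bar> + (r - 1) * \<bar>M\<bar>" by (simp add: algebra_simps)
  moreover have "M \<le> \<bar>M\<bar>" by simp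
  ultimately have "\<rho> * (r * r) / 2 > C * r + M" by (smt (verit))
  thus False using le by linarith
qed

lemma exists_min:
  fixes Q :: "real^'n^'n"
  assumes coer: "\<And>x. \<rho> * (x \<bullet> x) \<le> x \<bullet> (Q *v x)" and rho: "\<rho> > 0"
    and cl: "closed X" and ne: "X \<noteq> {}"
  shows "\<exists>x\<in>X. \<forall>y\<in>X. phiq Q c x \<le> phiq Q c y"
proof -
  obtain x0 where x0: "x0 \<in> X" using ne by blast
  have contQ: "continuous_on UNIV ((*v) Q)"
    by (rule linear_continuous_on[OF matrix_vector_mul_bounded_linear])
  have cont: "continuous_on UNIV (phiq Q c)"
    unfolding phiq_def by (intro continuous_intros contQ[THEN continuous_on_compose2]) auto
  define S where "S = X \<inter> {x. phiq Q c x \<le> phiq Q c x0}"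
  have "closed S" unfolding S_def
    by (intro closed_Int cl closed_Collect_le cont continuous_on_const)
  moreover have "bounded S"
    unfolding bounded_iff
  proof (intro exI ballI)
    fix x assume "x \<in> S"
    hence le: "phiq Q c x \<le> phiq Q c x0" by (simp add: S_def)
    have "c \<bullet> x \<ge> - (norm c * norm x)" using Cauchy_Schwarz_ineq2[of c x] by (simp add: abs_le_iff)
    moreover have "\<rho> * (norm x * norm x) \<le> x \<bullet> (Q *v x)" using coer[of x] by (simp add: dot_square_norm power2_eq_square)
    ultimately have "\<rho> * (norm x * norm x) / 2 - norm c * norm x \<le> phiq Q c x0" using le unfolding phiq_def by linarith
    thus "norm x \<le> 2 * (\<bar>norm c\<bar> + \<bar>phiq Q c x0\<bar>) / \<rho> + 1"
      by (intro coercive_bound[OF rho]) auto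
  qed
  ultimately have "compact S" by (simp add: compact_eq_bounded_closed)
  moreover have "S \<noteq> {}" using x0 by (auto simp: S_def)
  moreover have "continuous_on S (phiq Q c)" using cont by (rule continuous_on_subset) auto
  ultimately obtain x where xS: "x \<in> S" and mn: "\<forall>y\<in>S. phiq Q c x \<le> phiq Q c y"
    using continuous_attains_inf by blast
  have "\<forall>y\<in>X. phiq Q c x \<le> phiq Q c y"
  proof
    fix y assume y: "y \<in> X"
    show "phiq Q c x \<le> phiq Q c y"
    proof (cases "phiq Q c y \<le> phiq Q c x0")
      case True thus ?thesis using mn y by (auto simp: S_def)
    next
      case False thus ?thesis using xS by (auto simp: S_def)
    qed
  qed
  thus ?thesis using xS by (auto simp: S_def)
qed

lemma span_image_sum:
  fixes f :: "'i \<Rightarrow> 'a::real_vector"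
  assumes "x \<in> span (f ` I)" and fin: "finite I"
  shows "\<exists>c. x = (\<Sum>j\<in>I. c j *\<^sub>R f j)"
proof (rule span_induct[OF assms(1), where P = "\<lambda>x. \<exists>c. x = (\<Sum>j\<in>I. c j *\<^sub>R f j)"])
  show "subspace {x. \<exists>c. x = (\<Sum>j\<in>I. c j *\<^sub>R f j)}"
    unfolding subspace_def
  proof (intro conjI ballI allI)
    show "0 \<in> {x. \<exists>c. x = (\<Sum>j\<in>I. c j *\<^sub>R f j)}" by (auto intro!: exI[of _ "\<lambda>_. 0"])
  next
    fix x y assume "x \<in> {x. \<exists>c. x = (\<Sum>j\<in>I. c j *\<^sub>R f j)}" "y \<in> {x. \<exists>c. x = (\<Sum>j\<in>I. c j *\<^sub>R f j)}"
    then obtain c1 c2 where "x = (\<Sum>j\<in>I. c1 j *\<^sub>R f j)" "y = (\<Sum>j\<in>I. c2 j *\<^sub>R f j)" by auto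
    hence "x + y = (\<Sum>j\<in>I. (c1 j + c2 j) *\<^sub>R f j)" by (simp add: sum.distrib scaleR_add_left)
    thus "x + y \<in> {x. \<exists>c. x = (\<Sum>j\<in>I. c j *\<^sub>R f j)}" by (auto intro!: exI[of _ "\<lambda>j. c1 j + c2 j"])
  next
    fix k x assume "x \<in> {x. \<exists>c. x = (\<Sum>j\<in>I. c j *\<^sub>R f j)}"
    then obtain c1 where "x = (\<Sum>j\<in>I. c1 j *\<^sub>R f j)" by auto
    hence "k *\<^sub>R x = (\<Sum>j\<in>I. (k * c1 j) *\<^sub>R f j)" by (simp add: scaleR_sum_right)
    thus "k *\<^sub>R x \<in> {x. \<exists>c. x = (\<Sum>j\<in>I. c j *\<^sub>R f j)}" by (auto intro!: exI[of _ "\<lambda>j. k * c1 j"])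
  qed
next
  fix x assume "x \<in> f ` I"
  then obtain i where i: "i \<in> I" "x = f i" by auto
  have "(\<Sum>j\<in>I. (if j = i then 1 else 0) *\<^sub>R f j) = f i"
    using i fin by (simp add: if_distrib[of "\<lambda>a. a *\<^sub>R _"] sum.delta' cong: if_cong)
  thus "\<exists>c. x = (\<Sum>j\<in>I. c j *\<^sub>R f j)" using i by metis
qed

lemma exists_dir:
  fixes A :: "real^'n^'m"
  assumes licq: "\<And>c. (\<Sum>i\<in>Act. c i *\<^sub>R row i A) = 0 \<Longrightarrow> (\<forall>i\<in>Act. c i = 0)"
    and fin: "finite Act" and i: "i \<in> Act"
  shows "\<exists>d. (\<forall>j\<in>Act - {i}. row j A \<bullet> d = 0) \<and> row i A \<bullet> d > 0"
proof -
  define S where "S = (\<lambda>j. row j A) ` (Act - {i})"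
  obtain y w where y: "y \<in> span S" and w: "\<And>v. v \<in> span S \<Longrightarrow> orthogonal w v" and eq: "row i A = y + w"
    by (rule orthogonal_subspace_decomp_exists[where S=S and x="row i A"]) blast
  have o: "row j A \<bullet> w = 0" if "j \<in> Act - {i}" for j
  proof -
    have "row j A \<in> span S" using that by (auto simp: S_def intro: span_base)
    thus ?thesis using w orthogonal_def inner_commute by metis
  qed
  have wy: "w \<bullet> y = 0" using w[OF y] by (simp add: orthogonal_def)
  show ?thesis
  proof (cases "w = 0")
    case False
    have "row i A \<bullet> w = w \<bullet> w" using wy eq by (simp add: inner_add_left inner_commute[of y w])
    thus ?thesis using o False by (intro exI[of _ w]) auto
  next
    case True
    hence "row i A \<in> span S" using eq y by simp
    then obtain c where c: "row i A = (\<Sum>j\<in>Act - {i}. c j *\<^sub>R row j A)"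
      using span_image_sum[of "row i A" "\<lambda>j. row j A" "Act - {i}"] fin unfolding S_def by auto
    define c' where "c' = (\<lambda>j. if j = i then -1 else c j)"
    have "(\<Sum>j\<in>Act. c' j *\<^sub>R row j A) = c' i *\<^sub>R row i A + (\<Sum>j\<in>Act - {i}. c' j *\<^sub>R row j A)"
      using fin i by (simp add: sum.remove)
    also have "(\<Sum>j\<in>Act - {i}. c' j *\<^sub>R row j A) = (\<Sum>j\<in>Act - {i}. c j *\<^sub>R row j A)"
      by (intro sum.cong) (auto simp: c'_def)
    finally have "(\<Sum>j\<in>Act. c' j *\<^sub>R row j A) = 0" using c by (simp add: c'_def)
    hence "c' i = 0" using licq i by blast
    thus ?thesis by (simp add: c'_def)
  qed
qed


lemma mv_row: "(A *v v) $ j = row j A \<bullet> (v::real^'n)"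
  by (simp add: matrix_vector_mult_def row_def inner_vec_def mult.commute)

lemma polyhedron_INT: "polyhedron A b = (\<Inter>i. {x. row i A \<bullet> x \<le> b $ i})"
  by (auto simp: polyhedron_def mv_row)

lemma polyhedron_closed: "closed (polyhedron A b)"
  unfolding polyhedron_INT by (intro closed_INT closed_halfspace_le ballI)

lemma polyhedron_convex: "convex (polyhedron A b)"
  unfolding polyhedron_INT by (intro convex_INT convex_halfspace_le ballI)

lemma Htilde_mv: "Htilde \<rho> H *v y = \<rho> *\<^sub>R y + (1/2) *\<^sub>R (H *v y + transpose H *v y)"
  by (simp add: Htilde_def Hsym_def matrix_vector_mult_add_rdistrib scaleR_matrix_vector_assoc[symmetric])

lemma Htilde_inner: "x \<bullet> (Htilde \<rho> H *v y) = \<rho> * (x \<bullet> y) + (1/2) * (x \<bullet> (H *v y) + y \<bullet> (H *v x))"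
proof -
  have "x \<bullet> (transpose H *v y) = y \<bullet> (H *v x)"
    by (simp add: transpose_matrix_vector inner_commute[of x] dot_lmul_matrix)
  thus ?thesis by (simp add: Htilde_mv inner_add_right)
qed

theorem lemma2:
  fixes H :: "real^'n^'n" and f :: "real^'n" and A :: "real^'n^'m" and b :: "real^'m"
    and xs :: "real^'n" and lam :: "real^'m" and \<rho> :: real
  assumes nonempty: "polyhedron A b \<noteq> {}"
    and pd: "\<And>x. x \<noteq> 0 \<Longrightarrow> x \<bullet> ((H + transpose H) *v x) > 0"
    and sol: "is_AVI_sol H f A b xs"
    and uniq: "\<And>x. is_AVI_sol H f A b x \<Longrightarrow> x = xs"
    and licq: "\<And>c. (\<Sum>i\<in>active_set A b xs. c i *\<^sub>R row i A) = 0 \<Longrightarrow>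
                    (\<forall>i\<in>active_set A b xs. c i = 0)"
    and kkt: "H *v xs + f + transpose A *v lam = 0"
    and lam_nn: "\<And>i. lam $ i \<ge> 0"
    and slack_nn: "\<And>i. (b - A *v xs) $ i \<ge> 0"
    and compl: "lam \<bullet> (b - A *v xs) = 0"
    and lam_uniq: "\<And>l. H *v xs + f + transpose A *v l = 0 \<Longrightarrow> (\<forall>i. l $ i \<ge> 0)
                     \<Longrightarrow> l \<bullet> (b - A *v xs) = 0 \<Longrightarrow> l = lam"
    and strict: "\<And>i. i \<in> active_set A b xs \<Longrightarrow> lam $ i > 0"
    and rho: "\<rho> > 0"
  shows "\<exists>U. open U \<and> xs \<in> U \<and> (\<forall>z\<in>U. A_QP \<rho> H f A b z = active_set A b xs)"
proof -
  define Q where "Q = Htilde \<rho> H"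
  define cz where "cz = ftilde \<rho> H f"
  define X where "X = polyhedron A b"
  define Act where "Act = active_set A b xs"
  define S where "S = Sx \<rho> H f A b"
  have sym: "\<And>x y. x \<bullet> (Q *v y) = y \<bullet> (Q *v x)"
    unfolding Q_def Htilde_inner by (simp add: inner_commute)
  have coer: "\<rho> * (x \<bullet> x) \<le> x \<bullet> (Q *v x)" for x
  proof -
    have "0 \<le> x \<bullet> ((H + transpose H) *v x)" using pd[of x] by (cases "x = 0") auto
    moreover have "x \<bullet> ((H + transpose H) *v x) = x \<bullet> (H *v x) + x \<bullet> (H *v x)"
      by (simp add: matrix_vector_mult_add_rdistrib inner_add_right transpose_matrix_vector
          inner_commute[of x "x v* H"] dot_lmul_matrix)
    ultimately show ?thesis unfolding Q_def Htilde_inner by simp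
  qed
  have psd: "0 \<le> x \<bullet> (Q *v x)" for x
    using coer[of x] rho by (smt (verit) inner_ge_zero mult_nonneg_nonneg)
  have cvx: "convex X" and cl: "closed X" and ne: "X \<noteq> {}"
    using polyhedron_convex polyhedron_closed nonempty by (auto simp: X_def)
  have obj: "QP_obj \<rho> H f z = phiq Q (cz z)" for z
    by (simp add: fun_eq_iff QP_obj_def phiq_def Q_def cz_def)
  have ex1: "\<exists>!x. x \<in> X \<and> (\<forall>y\<in>X. phiq Q (cz z) x \<le> phiq Q (cz z) y)" for z
  proof -
    obtain x where "x \<in> X \<and> (\<forall>y\<in>X. phiq Q (cz z) x \<le> phiq Q (cz z) y)"
      using exists_min[OF coer rho cl ne] by blast
    moreover have "x1 = x2" if "x1 \<in> X \<and> (\<forall>y\<in>X. phiq Q (cz z) x1 \<le> phiq Q (cz z) y)"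
      "x2 \<in> X \<and> (\<forall>y\<in>X. phiq Q (cz z) x2 \<le> phiq Q (cz z) y)" for x1 x2
    proof -
      have "\<rho> * norm (x1 - x2) \<le> norm (cz z - cz z)"
        using that by (intro VI_lip[OF coer rho, of x1 X x2]) (auto intro: min_VI[OF sym psd cvx])
      thus ?thesis using rho by (simp add: mult_le_0_iff)
    qed
    ultimately show ?thesis by blast
  qed
  have S_eq: "S z = (THE x. x \<in> X \<and> (\<forall>y\<in>X. phiq Q (cz z) x \<le> phiq Q (cz z) y))" for z
    by (simp add: S_def Sx_def obj X_def)
  have S_in: "S z \<in> X" and S_VI: "\<forall>y\<in>X. (Q *v S z + cz z) \<bullet> (y - S z) \<ge> 0" for z
  proof -
    have *: "S z \<in> X \<and> (\<forall>y\<in>X. phiq Q (cz z) (S z) \<le> phiq Q (cz z) y)"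
      unfolding S_eq by (rule theI'[OF ex1])
    thus "S z \<in> X" by blast
    show "\<forall>y\<in>X. (Q *v S z + cz z) \<bullet> (y - S z) \<ge> 0"
      using * by (auto intro: min_VI[OF sym psd cvx])
  qed
  have xsX: "xs \<in> X" using sol by (simp add: is_AVI_sol_def X_def)
  have g0: "Q *v xs + cz xs = - (transpose A *v lam)"
  proof -
    have "H *v xs + f = - (transpose A *v lam)" using kkt by (simp add: eq_neg_iff_add_eq_0)
    thus ?thesis by (simp add: cz_def ftilde_def Q_def matrix_vector_mult_diff_rdistrib algebra_simps)
  qed
  have xs_VI: "\<forall>y\<in>X. (Q *v xs + cz xs) \<bullet> (y - xs) \<ge> 0"
  proof
    fix y assume y: "y \<in> X"
    have "(Q *v xs + cz xs) \<bullet> (y - xs) = - (lam \<bullet> (A *v y - A *v xs))"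
      by (simp add: g0 transpose_matrix_vector dot_lmul_matrix matrix_vector_mult_diff_distrib)
    also have "lam \<bullet> (A *v y - A *v xs) = - (lam \<bullet> (b - A *v y)) + lam \<bullet> (b - A *v xs)"
      by (simp add: inner_diff_right)
    also have "lam \<bullet> (b - A *v y) \<ge> 0"
      using y lam_nn unfolding X_def polyhedron_def inner_vec_def
      by (intro sum_nonneg) (auto intro!: mult_nonneg_nonneg)
    hence "- (- (lam \<bullet> (b - A *v y)) + lam \<bullet> (b - A *v xs)) \<ge> 0" using compl by simp
    finally show "(Q *v xs + cz xs) \<bullet> (y - xs) \<ge> 0" by simp
  qed
  have Sxs: "S xs = xs"
  proof -
    have "\<rho> * norm (S xs - xs) \<le> norm (cz xs - cz xs)"
      by (rule VI_lip[OF coer rho S_in xsX S_VI xs_VI])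
    thus ?thesis using rho by (simp add: mult_le_0_iff)
  qed
  have lip: "\<rho> * norm (S z - xs) \<le> norm (cz z - cz xs)" for z
    by (rule VI_lip[OF coer rho S_in xsX S_VI xs_VI])
  have lam0: "lam $ j = 0" if "j \<notin> Act" for j
  proof -
    have "(\<Sum>k\<in>UNIV. lam $ k * (b - A *v xs) $ k) = 0" using compl by (simp add: inner_vec_def)
    hence "\<forall>k\<in>UNIV. lam $ k * (b - A *v xs) $ k = 0"
      using slack_nn by (subst (asm) sum_nonneg_eq_0_iff) (auto intro!: mult_nonneg_nonneg lam_nn)
    moreover have "(b - A *v xs) $ j \<noteq> 0" using that by (simp add: Act_def active_set_def)
    ultimately show ?thesis by auto
  qed
  have finAct: "finite Act" by simp
  have "\<forall>i\<in>Act. \<exists>d. (\<forall>j\<in>Act - {i}. row j A \<bullet> d = 0) \<and> row i A \<bullet> d > 0"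
    using exists_dir[OF licq[folded Act_def] finAct] unfolding Act_def by blast
  then obtain D where D: "\<And>i. i \<in> Act \<Longrightarrow> (\<forall>j\<in>Act - {i}. row j A \<bullet> D i = 0) \<and> row i A \<bullet> D i > 0"
    by metis
  have g0D: "(Q *v xs + cz xs) \<bullet> D i < 0" if i: "i \<in> Act" for i
  proof -
    have "(Q *v xs + cz xs) \<bullet> D i = - (lam \<bullet> (A *v D i))"
      by (simp add: g0 transpose_matrix_vector dot_lmul_matrix)
    also have "lam \<bullet> (A *v D i) = (\<Sum>j\<in>UNIV. lam $ j * (A *v D i) $ j)"
      by (simp add: inner_vec_def)
    also have "(\<Sum>j\<in>UNIV. lam $ j * (A *v D i) $ j) = lam $ i * (A *v D i) $ i + (\<Sum>j\<in>UNIV - {i}. lam $ j * (A *v D i) $ j)"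
      by (simp add: sum.remove)
    also have "(\<Sum>j\<in>UNIV - {i}. lam $ j * (A *v D i) $ j) = 0"
    proof (intro sum.neutral ballI)
      fix j assume j: "j \<in> UNIV - {i}"
      show "lam $ j * (A *v D i) $ j = 0"
      proof (cases "j \<in> Act")
        case True thus ?thesis using D[OF i] j by (simp add: mv_row)
      next
        case False thus ?thesis using lam0 by simp
      qed
    qed
    finally show ?thesis using strict[of i] D[OF i] i by (simp add: mv_row Act_def)
  qed
  have bl: "bounded_linear ((*v) M)" for M :: "real^'n^'n" by (rule matrix_vector_mul_bounded_linear)
  have T1: "(cz \<longlongrightarrow> cz xs) (at xs)"
  proof -
    have "((\<lambda>z. (H - Q) *v z) \<longlongrightarrow> (H - Q) *v xs) (at xs)"
      by (rule bounded_linear.tendsto[OF bl tendsto_ident_at])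
    hence "((\<lambda>z. f + (H - Q) *v z) \<longlongrightarrow> f + (H - Q) *v xs) (at xs)"
      by (intro tendsto_add tendsto_const)
    moreover have "cz = (\<lambda>z. f + (H - Q) *v z)" by (auto simp: fun_eq_iff cz_def ftilde_def Q_def)
    ultimately show ?thesis by simp
  qed
  have T2: "(S \<longlongrightarrow> xs) (at xs)"
  proof (rule LIM_zero_cancel, rule Lim_null_comparison)
    show "\<forall>\<^sub>F z in at xs. norm (S z - xs) \<le> norm (cz z - cz xs) / \<rho>"
      using lip rho by (intro always_eventually allI) (simp add: pos_le_divide_eq mult.commute)
    show "((\<lambda>z. norm (cz z - cz xs) / \<rho>) \<longlongrightarrow> 0) (at xs)"
      by (intro tendsto_divide_zero tendsto_norm_zero LIM_zero T1)
  qed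
  have T3: "((\<lambda>z. Q *v S z + cz z) \<longlongrightarrow> Q *v xs + cz xs) (at xs)"
    by (intro tendsto_add T1 bounded_linear.tendsto[OF bl T2])
  have E1: "\<forall>\<^sub>F z in at xs. \<forall>j\<in>-Act. (A *v S z) $ j < b $ j"
  proof (rule eventually_ball_finite, simp, intro ballI)
    fix j assume j: "j \<in> - Act"
    have "((\<lambda>z. (A *v S z) $ j) \<longlongrightarrow> (A *v xs) $ j) (at xs)"
      by (intro tendsto_vec_nth bounded_linear.tendsto[OF matrix_vector_mul_bounded_linear T2])
    moreover have "(A *v xs) $ j < b $ j"
      using slack_nn[of j] j by (simp add: Act_def active_set_def)
    ultimately show "\<forall>\<^sub>F z in at xs. (A *v S z) $ j < b $ j" by (rule order_tendstoD(2))
  qed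
  have E2: "\<forall>\<^sub>F z in at xs. \<forall>i\<in>Act. (Q *v S z + cz z) \<bullet> D i < 0"
  proof (rule eventually_ball_finite[OF finAct], intro ballI)
    fix i assume i: "i \<in> Act"
    have "((\<lambda>z. (Q *v S z + cz z) \<bullet> D i) \<longlongrightarrow> (Q *v xs + cz xs) \<bullet> D i) (at xs)"
      by (intro tendsto_inner T3 tendsto_const)
    thus "\<forall>\<^sub>F z in at xs. (Q *v S z + cz z) \<bullet> D i < 0" using g0D[OF i] by (rule order_tendstoD(2))
  qed
  define R where "R z \<longleftrightarrow> (\<forall>j\<in>-Act. (A *v S z) $ j < b $ j) \<and> (\<forall>i\<in>Act. (Q *v S z + cz z) \<bullet> D i < 0)" for z
  have "\<forall>\<^sub>F z in at xs. R z" unfolding R_def using E1 E2 by (rule eventually_conj)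
  moreover have "R xs"
    unfolding R_def Sxs using g0D slack_nn
    by (auto simp: Act_def active_set_def order_less_le)
  ultimately have "\<forall>\<^sub>F z in nhds xs. R z" by (simp add: eventually_nhds_conv_at)
  then obtain U where U: "open U" "xs \<in> U" "\<And>z. z \<in> U \<Longrightarrow> R z" unfolding eventually_nhds by blast
  have "A_QP \<rho> H f A b z = Act" if z: "z \<in> U" for z
  proof -
    define x where "x = S z"
    define g where "g = Q *v S z + cz z"
    have Rz: "R z" using U z by blast
    have xX: "x \<in> X" using S_in by (simp add: x_def)
    have vi: "\<forall>y\<in>X. g \<bullet> (y - x) \<ge> 0" using S_VI by (simp add: x_def g_def)
    have "A_QP \<rho> H f A b z = active_set A b x" by (simp add: A_QP_def x_def S_def)
    moreover have "active_set A b x \<subseteq> Act"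
    proof
      fix j assume j: "j \<in> active_set A b x"
      show "j \<in> Act"
      proof (rule ccontr)
        assume "j \<notin> Act"
        hence "(A *v x) $ j < b $ j" using Rz unfolding R_def x_def by blast
        thus False using j by (simp add: active_set_def)
      qed
    qed
    moreover have "Act \<subseteq> active_set A b x"
    proof
      fix i assume i: "i \<in> Act"
      show "i \<in> active_set A b x"
      proof (rule ccontr)
        assume na: "i \<notin> active_set A b x"
        define d where "d = D i"
        have gd: "g \<bullet> d < 0" using Rz i by (simp add: R_def g_def d_def)
        have ev: "\<forall>\<^sub>F t in at_right (0::real). (A *v (x + t *\<^sub>R d)) $ j \<le> b $ j" for j
        proof (cases "(A *v d) $ j = 0")
          case True
          thus ?thesis using xX by (simp add: X_def polyhedron_def matrix_vector_right_distrib matrix_vector_mult_scaleR)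
        next
          case False
          have "(A *v x) $ j < b $ j"
          proof (cases "j \<in> Act")
            case True
            hence "j = i" using False D[OF i] by (auto simp: mv_row d_def)
            thus ?thesis using na xX by (auto simp: X_def polyhedron_def active_set_def order_less_le)
          next
            case False thus ?thesis using Rz by (simp add: R_def x_def)
          qed
          moreover have "((\<lambda>t. (A *v x) $ j + t * (A *v d) $ j) \<longlongrightarrow> (A *v x) $ j + 0 * (A *v d) $ j) (at_right 0)"
            by (intro tendsto_intros)
          ultimately have "\<forall>\<^sub>F t in at_right (0::real). (A *v x) $ j + t * (A *v d) $ j < b $ j"
            by (intro order_tendstoD(2)) auto
          thus ?thesis
            by eventually_elim (simp add: matrix_vector_right_distrib matrix_vector_mult_scaleR)
        qed
        have "\<forall>\<^sub>F t in at_right (0::real). (\<forall>j. (A *v (x + t *\<^sub>R d)) $ j \<le> b $ j) \<and> 0 < t"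
          using eventually_all_finite[OF ev] eventually_at_right_less by (rule eventually_conj)
        then obtain t where t: "\<forall>j. (A *v (x + t *\<^sub>R d)) $ j \<le> b $ j" "0 < t"
          using eventually_happens'[OF trivial_limit_at_right_real] by blast
        have "x + t *\<^sub>R d \<in> X" using t by (simp add: X_def polyhedron_def)
        hence "g \<bullet> (x + t *\<^sub>R d - x) \<ge> 0" using vi by blast
        hence "t * (g \<bullet> d) \<ge> 0" by simp
        hence "g \<bullet> d \<ge> 0" using t(2) by (simp add: zero_le_mult_iff)
        thus False using gd by simp
      qed
    qed
    ultimately show ?thesis by blast
  qed
  thus ?thesis using U unfolding Act_def by blast
qed

end
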